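(* Let $U=U_kV_k\cdots U_1V_1U_0$ be a product of unitaries alternating between incoherent unitaries $U_i$ and (generalised controlled) Hadamards $V_i$. Then for any state $|\psi\rangle$ the coherence rank satisfies $\dfrac{\chi(|\psi\rangle)}{2^k}\le \chi(U|\psi\rangle)\le 2^k\chi(|\psi\rangle)$.
   Context: The coherence rank $\chi(|\psi\rangle)$ of a pure state is the minimum number of terms needed to write it as a linear combination of computational basis states. A unitary is incoherent if it has the form $\sum_x e^{i\theta_x}|\pi(x)\rangle\langle x|$ for real $\theta_x$ and a permutation $\pi$. A generalised controlled Hadamard is $\sum_{x\in S}|x\rangle\langle x|\otimes H+\sum_{y\in S^c}|y\rangle\langle y|\otimes I$ for a subset $S$ of bitstrings (this includes a plain Hadamard on one qubit). *)

theory Defs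
  imports Complex_Main "HOL-Combinatorics.Permutations"
begin

text \<open>Computational basis states are indexed by the bitstrings
  encoded as naturals x < 2^n (bit j of x = value of qubit j). A state is a function
  nat => complex vanishing outside {..<2^n}; an operator is a matrix nat => nat => complex
  (entry A y x = <y|A|x>).\<close>

type_synonym qstate = "nat \<Rightarrow> complex"
type_synonym qop = "nat \<Rightarrow> nat \<Rightarrow> complex"

definition is_state :: "nat \<Rightarrow> qstate \<Rightarrow> bool" where
  "is_state n \<psi> \<longleftrightarrow> (\<forall>x. x \<ge> 2^n \<longrightarrow> \<psi> x = 0) \<and> (\<Sum>x<2^n. (cmod (\<psi> x))\<^sup>2) = 1"

definition apply_op :: "nat \<Rightarrow> qop \<Rightarrow> qstate \<Rightarrow> qstate" where
  "apply_op n A \<psi> = (\<lambda>y. if y < 2^n then (\<Sum>x<2^n. A y x * \<psi> x) else 0)"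

definition coh_rank :: "nat \<Rightarrow> qstate \<Rightarrow> nat" where
  "coh_rank n \<psi> = (LEAST k. \<exists>T c. T \<subseteq> {..<2^n} \<and> card T = k \<and>
       (\<forall>y<2^n. \<psi> y = (\<Sum>x\<in>T. c x * (if y = x then 1 else 0))))"

definition incoherent :: "nat \<Rightarrow> qop \<Rightarrow> bool" where
  "incoherent n A \<longleftrightarrow> (\<exists>\<pi> \<theta>. \<pi> permutes {..<2^n} \<and>
      (\<forall>y x. A y x = (if x < 2^n \<and> y = \<pi> x then cis (\<theta> x) else 0)))"

text \<open>Generalised controlled Hadamard with target qubit t and control set S: on basis
  states whose other qubits (i.e. x with bit t cleared) lie in S, apply H to qubit t;
  otherwise act as identity. S = everything gives a plain Hadamard on qubit t.\<close>
definition gen_ch_mat :: "nat \<Rightarrow> nat \<Rightarrow> nat set \<Rightarrow> qop" where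
  "gen_ch_mat n t S = (\<lambda>y x.
     if x < 2^n \<and> y < 2^n then
       (if unset_bit t x \<in> S then
          (if unset_bit t y = unset_bit t x then
             (if bit x t \<and> bit y t then - 1 else 1) / complex_of_real (sqrt 2)
           else 0)
        else (if y = x then 1 else 0))
     else 0)"

definition gen_ch :: "nat \<Rightarrow> qop \<Rightarrow> bool" where
  "gen_ch n V \<longleftrightarrow> (\<exists>t S. t < n \<and> V = gen_ch_mat n t S)"

text \<open>Circuit U = U_k V_k ... U_1 V_1 U_0 given Us = [U_0,...,U_k], Vs = [V_1,...,V_k].\<close>
fun run_circ :: "nat \<Rightarrow> qop list \<Rightarrow> qop list \<Rightarrow> qstate \<Rightarrow> qstate" where
  "run_circ n [] Vs \<psi> = \<psi>"
| "run_circ n [U] Vs \<psi> = apply_op n U \<psi>"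
| "run_circ n (U # U' # Us) [] \<psi> = apply_op n U \<psi>"
| "run_circ n (U # U' # Us) (V # Vs) \<psi> = run_circ n (U' # Us) Vs (apply_op n V (apply_op n U \<psi>))"

end

theory Submission
  imports Defs
begin

definition supp :: "nat \<Rightarrow> qstate \<Rightarrow> nat set" where
  "supp n \<phi> = {x. x < 2^n \<and> \<phi> x \<noteq> 0}"

lemma finite_supp[simp]: "finite (supp n \<phi>)"
  by (rule finite_subset[of _ "{..<2^n}"]) (auto simp: supp_def)

lemma sum_delta_helper:
  assumes "finite T"
  shows "(\<Sum>x\<in>T. c x * (if y = x then 1 else 0)) = (if y \<in> T then c y else (0::complex))"
proof -
  have "(\<Sum>x\<in>T. c x * (if y = x then 1 else 0)) = (\<Sum>x\<in>T. if y = x then c x else 0)"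
    by (rule sum.cong) auto
  also have "\<dots> = (if y \<in> T then c y else 0)" using assms by (simp add: sum.delta)
  finally show ?thesis .
qed

lemma coh_rank_supp: "coh_rank n \<phi> = card (supp n \<phi>)"
  unfolding coh_rank_def
proof (rule Least_equality)
  show "\<exists>T c. T \<subseteq> {..<2 ^ n} \<and> card T = card (supp n \<phi>) \<and>
      (\<forall>y<2 ^ n. \<phi> y = (\<Sum>x\<in>T. c x * (if y = x then 1 else 0)))"
    by (rule exI[of _ "supp n \<phi>"], rule exI[of _ \<phi>])
       (auto simp: sum_delta_helper supp_def)
next
  fix k assume "\<exists>T c. T \<subseteq> {..<2 ^ n} \<and> card T = k \<and>
      (\<forall>y<2 ^ n. \<phi> y = (\<Sum>x\<in>T. c x * (if y = x then 1 else 0)))"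
  then obtain T c where T: "T \<subseteq> {..<2 ^ n}" "card T = k"
    "\<forall>y<2 ^ n. \<phi> y = (\<Sum>x\<in>T. c x * (if y = x then 1 else 0))" by blast
  have fT: "finite T" using T(1) finite_subset by blast
  have "supp n \<phi> \<subseteq> T"
  proof
    fix y assume "y \<in> supp n \<phi>"
    then have "y < 2^n" "\<phi> y \<noteq> 0" by (auto simp: supp_def)
    then show "y \<in> T" using T(3) sum_delta_helper[OF fT, of c y] by (auto split: if_splits)
  qed
  then show "card (supp n \<phi>) \<le> k" using card_mono[OF fT] T(2) by blast
qed

lemma incoh_supp:
  assumes "incoherent n U"
  shows "card (supp n (apply_op n U \<phi>)) = card (supp n \<phi>)"
proof -
  obtain \<pi> \<theta> where p: "\<pi> permutes {..<2^n}"
    and U: "\<forall>y x. U y x = (if x < 2^n \<and> y = \<pi> x then cis (\<theta> x) else 0)"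
    using assms unfolding incoherent_def by blast
  have inj: "inj \<pi>" using p permutes_inj by blast
  have img: "\<And>x. x < 2^n \<Longrightarrow> \<pi> x < 2^n" using p permutes_in_image by fastforce
  have val: "apply_op n U \<phi> (\<pi> x) = cis (\<theta> x) * \<phi> x" if x: "x < 2^n" for x
  proof -
    have "apply_op n U \<phi> (\<pi> x) = (\<Sum>x'<2^n. U (\<pi> x) x' * \<phi> x')"
      using img[OF x] by (simp add: apply_op_def)
    also have "\<dots> = (\<Sum>x'<2^n. if x' = x then cis (\<theta> x) * \<phi> x else 0)"
      by (rule sum.cong) (auto simp: U dest: injD[OF inj])
    also have "\<dots> = cis (\<theta> x) * \<phi> x" using x by (simp add: sum.delta')
    finally show ?thesis .
  qed
  have "supp n (apply_op n U \<phi>) = \<pi> ` supp n \<phi>"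
  proof
    show "\<pi> ` supp n \<phi> \<subseteq> supp n (apply_op n U \<phi>)"
      by (auto simp: supp_def val img)
  next
    show "supp n (apply_op n U \<phi>) \<subseteq> \<pi> ` supp n \<phi>"
    proof
      fix y assume y: "y \<in> supp n (apply_op n U \<phi>)"
      then have "y < 2^n" by (simp add: supp_def)
      then have "y \<in> \<pi> ` {..<2^n}" using permutes_image[OF p] by simp
      then obtain x where x: "x < 2^n" "y = \<pi> x" by auto
      then have "\<phi> x \<noteq> 0" using y val[OF x(1)] by (auto simp: supp_def)
      then show "y \<in> \<pi> ` supp n \<phi>" using x by (auto simp: supp_def)
    qed
  qed
  then show ?thesis using inj by (simp add: card_image inj_on_subset)
qed

lemma set_bit_lt: "(y::nat) < 2^n \<Longrightarrow> t < n \<Longrightarrow> set_bit t y < 2^n"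
  by (metis take_bit_nat_eq_self_iff take_bit_set_bit_eq not_le)

lemma unset_bit_lt: "(y::nat) < 2^n \<Longrightarrow> unset_bit t y < 2^n"
proof -
  assume y: "y < 2^n"
  then have ty: "take_bit n y = y" by (simp add: take_bit_nat_eq_self_iff)
  have "take_bit n (unset_bit t y) = unset_bit t y"
  proof (rule bit_eqI)
    fix m
    have "bit y m \<Longrightarrow> m < n" using ty by (metis bit_take_bit_iff)
    then show "bit (take_bit n (unset_bit t y)) m = bit (unset_bit t y) m"
      by (auto simp: bit_take_bit_iff bit_unset_bit_iff)
  qed
  then show ?thesis by (simp add: take_bit_nat_eq_self_iff)
qed

lemma unset_eq_cases:
  "unset_bit t (x::nat) = unset_bit t y \<Longrightarrow> x = unset_bit t y \<or> x = set_bit t y"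
proof -
  assume h: "unset_bit t (x::nat) = unset_bit t y"
  have hb: "m \<noteq> t \<Longrightarrow> bit x m = bit y m" for m
    using arg_cong[OF h, of "\<lambda>z. bit z m"] by (simp add: bit_unset_bit_iff)
  show ?thesis
  proof (cases "bit x t")
    case True
    have "x = set_bit t y"
    proof (rule bit_eqI)
      fix m show "bit x m = bit (set_bit t y) m"
        by (cases "m = t") (simp_all add: True hb bit_set_bit_iff)
    qed
    then show ?thesis by blast
  next
    case False
    have "x = unset_bit t y"
    proof (rule bit_eqI)
      fix m show "bit x m = bit (unset_bit t y) m"
        by (cases "m = t") (simp_all add: False hb bit_unset_bit_iff)
    qed
    then show ?thesis by blast
  qed
qed

lemma bitfacts:
  fixes y :: nat
  shows "unset_bit t (unset_bit t y) = unset_bit t y"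
    "unset_bit t (set_bit t y) = unset_bit t y"
    "set_bit t (unset_bit t y) = set_bit t y"
    "\<not> bit (unset_bit t y) t" "bit (set_bit t y) t"
    "unset_bit t y \<noteq> set_bit t y"
    "\<not> bit y t \<Longrightarrow> unset_bit t y = y"
    "bit y t \<Longrightarrow> set_bit t y = y"
  subgoal by (rule bit_eqI) (simp add: bit_unset_bit_iff)
  subgoal by (rule bit_eqI) (auto simp: bit_unset_bit_iff bit_set_bit_iff)
  subgoal by (rule bit_eqI) (auto simp: bit_unset_bit_iff bit_set_bit_iff)
  subgoal by (simp add: bit_unset_bit_iff)
  subgoal by (simp add: bit_set_bit_iff)
  subgoal
  proof
    assume "unset_bit t y = set_bit t y"
    then have "bit (unset_bit t y) t = bit (set_bit t y) t" by simp
    then show False by (simp add: bit_unset_bit_iff bit_set_bit_iff)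
  qed
  subgoal by (rule bit_eqI) (auto simp: bit_unset_bit_iff)
  subgoal by (rule bit_eqI) (auto simp: bit_set_bit_iff)
  done

lemma gch_formula:
  assumes t: "t < n" and y: "y < 2^n"
  shows "apply_op n (gen_ch_mat n t S) \<phi> y =
    (if unset_bit t y \<in> S then
       (\<phi> (unset_bit t y) + (if bit y t then -1 else 1) * \<phi> (set_bit t y)) / complex_of_real (sqrt 2)
     else \<phi> y)"
proof (cases "unset_bit t y \<in> S")
  case True
  let ?u = "unset_bit t y" and ?s = "set_bit t y"
  have u: "?u < 2^n" using unset_bit_lt[OF y] .
  have s: "?s < 2^n" using set_bit_lt[OF y t] .
  have "apply_op n (gen_ch_mat n t S) \<phi> y = (\<Sum>x<2^n. gen_ch_mat n t S y x * \<phi> x)"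
    using y by (simp add: apply_op_def)
  also have "\<dots> = (\<Sum>x\<in>{?u, ?s}. gen_ch_mat n t S y x * \<phi> x)"
  proof (rule sum.mono_neutral_right)
    show "\<forall>x\<in>{..<2 ^ n} - {?u, ?s}. gen_ch_mat n t S y x * \<phi> x = 0"
    proof
      fix x assume x: "x \<in> {..<2 ^ n} - {?u, ?s}"
      then have ne: "unset_bit t y \<noteq> unset_bit t x"
        using unset_eq_cases[of t x y] by (metis DiffD2 insertCI)
      have "y = ?u \<or> y = ?s" by (rule unset_eq_cases[OF refl])
      then have "y \<noteq> x" using x by blast
      then show "gen_ch_mat n t S y x * \<phi> x = 0" using ne by (simp add: gen_ch_mat_def)
    qed
  qed (use u s in auto)
  also have "\<dots> = (\<phi> ?u + (if bit y t then -1 else 1) * \<phi> ?s) / complex_of_real (sqrt 2)"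
  proof -
    have ne: "?u \<noteq> ?s" by (rule bitfacts(6))
    have a: "gen_ch_mat n t S y ?u = 1 / complex_of_real (sqrt 2)"
      using True u y bitfacts(1,4)[of t y] unfolding gen_ch_mat_def by simp
    have b: "gen_ch_mat n t S y ?s = (if bit y t then -1 else 1) / complex_of_real (sqrt 2)"
      using True s y bitfacts(2,5)[of t y] unfolding gen_ch_mat_def by simp
    show ?thesis using ne by (simp add: a b add_divide_distrib)
  qed
  finally show ?thesis using True by simp
next
  case False
  have "apply_op n (gen_ch_mat n t S) \<phi> y = (\<Sum>x<2^n. gen_ch_mat n t S y x * \<phi> x)"
    using y by (simp add: apply_op_def)
  also have "\<dots> = (\<Sum>x<2^n. if x = y then \<phi> y else 0)"
    by (rule sum.cong) (use False y in \<open>auto simp: gen_ch_mat_def\<close>)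
  also have "\<dots> = \<phi> y" using y by simp
  finally show ?thesis using False by simp
qed

lemma gch_supp_upper:
  assumes t: "t < n"
  shows "card (supp n (apply_op n (gen_ch_mat n t S) \<phi>)) \<le> 2 * card (supp n \<phi>)"
proof -
  have sub: "supp n (apply_op n (gen_ch_mat n t S) \<phi>) \<subseteq> supp n \<phi> \<union> flip_bit t ` supp n \<phi>"
  proof
    fix y assume yin: "y \<in> supp n (apply_op n (gen_ch_mat n t S) \<phi>)"
    then have y: "y < 2^n" by (simp add: supp_def)
    have u: "unset_bit t y < 2^n" using unset_bit_lt[OF y] .
    have s: "set_bit t y < 2^n" using set_bit_lt[OF y t] .
    have fu: "unset_bit t y = y \<or> y = flip_bit t (unset_bit t y)"
      by (cases "bit y t") (simp_all add: flip_bit_eq_if bitfacts)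
    have fs: "set_bit t y = y \<or> y = flip_bit t (set_bit t y)"
      by (cases "bit y t") (simp_all add: flip_bit_eq_if bitfacts)
    show "y \<in> supp n \<phi> \<union> flip_bit t ` supp n \<phi>"
    proof (cases "unset_bit t y \<in> S")
      case True
      then have "\<phi> (unset_bit t y) \<noteq> 0 \<or> \<phi> (set_bit t y) \<noteq> 0"
        using yin gch_formula[OF t y, of S \<phi>] by (auto simp: supp_def)
      then show ?thesis
      proof
        assume "\<phi> (unset_bit t y) \<noteq> 0"
        then have ui: "unset_bit t y \<in> supp n \<phi>" using u by (simp add: supp_def)
        from fu show ?thesis
        proof
          assume "unset_bit t y = y" then show ?thesis using ui by simp
        next
          assume "y = flip_bit t (unset_bit t y)" then show ?thesis using ui by simp
        qed
      next
        assume "\<phi> (set_bit t y) \<noteq> 0"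
        then have ui: "set_bit t y \<in> supp n \<phi>" using s by (simp add: supp_def)
        from fs show ?thesis
        proof
          assume "set_bit t y = y" then show ?thesis using ui by simp
        next
          assume "y = flip_bit t (set_bit t y)" then show ?thesis using ui by simp
        qed
      qed
    next
      case False
      then show ?thesis using yin gch_formula[OF t y, of S \<phi>] y by (auto simp: supp_def)
    qed
  qed
  have "card (supp n (apply_op n (gen_ch_mat n t S) \<phi>)) \<le> card (supp n \<phi> \<union> flip_bit t ` supp n \<phi>)"
    by (rule card_mono[OF _ sub]) simp
  also have "\<dots> \<le> card (supp n \<phi>) + card (flip_bit t ` supp n \<phi>)" by (rule card_Un_le)
  also have "\<dots> \<le> 2 * card (supp n \<phi>)" using card_image_le[of "supp n \<phi>" "flip_bit t"] by simp
  finally show ?thesis .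
qed

lemma gch_invol:
  assumes t: "t < n" and y: "y < 2^n"
  shows "apply_op n (gen_ch_mat n t S) (apply_op n (gen_ch_mat n t S) \<phi>) y = \<phi> y"
proof -
  let ?V = "apply_op n (gen_ch_mat n t S)"
  let ?u = "unset_bit t y" and ?s = "set_bit t y"
  have u: "?u < 2^n" using unset_bit_lt[OF y] .
  have s: "?s < 2^n" using set_bit_lt[OF y t] .
  define r where "r = complex_of_real (sqrt 2)"
  have "r * r = complex_of_real (sqrt 2 * sqrt 2)" unfolding r_def by (simp only: of_real_mult)
  then have rr: "r * r = 2" by simp
  have r0: "r \<noteq> 0" unfolding r_def by simp
  show ?thesis
  proof (cases "?u \<in> S")
    case True
    have Vu: "?V \<phi> ?u = (\<phi> ?u + \<phi> ?s) / r"
      using gch_formula[OF t u, of S \<phi>] True bitfacts bitfacts(8)[OF bitfacts(5)] by (simp add: r_def)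
    have Vs: "?V \<phi> ?s = (\<phi> ?u - \<phi> ?s) / r"
      using gch_formula[OF t s, of S \<phi>] True bitfacts bitfacts(8)[OF bitfacts(5)] by (simp add: r_def)
    have "?V (?V \<phi>) y = (?V \<phi> ?u + (if bit y t then -1 else 1) * ?V \<phi> ?s) / r"
      using gch_formula[OF t y, of S "?V \<phi>"] True by (simp add: r_def)
    also have "\<dots> = \<phi> y"
    proof (cases "bit y t")
      case True
      then have "y = ?s" using bitfacts(8)[of y t] by simp
      have "(?V \<phi> ?u + (if bit y t then -1 else 1) * ?V \<phi> ?s) / r = 2 * \<phi> ?s / (r * r)"
        using True r0 by (simp add: Vu Vs field_simps)
      then show ?thesis using rr \<open>y = ?s\<close> by simp
    next
      case False
      then have "y = ?u" using bitfacts(7)[of y t] by simp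
      have "(?V \<phi> ?u + (if bit y t then -1 else 1) * ?V \<phi> ?s) / r = 2 * \<phi> ?u / (r * r)"
        using False r0 by (simp add: Vu Vs field_simps)
      then show ?thesis using rr \<open>y = ?u\<close> by simp
    qed
    finally show ?thesis .
  next
    case False
    then show ?thesis using gch_formula[OF t y, of S] by simp
  qed
qed

lemma gch_supp_lower:
  assumes t: "t < n"
  shows "card (supp n \<phi>) \<le> 2 * card (supp n (apply_op n (gen_ch_mat n t S) \<phi>))"
proof -
  have "supp n (apply_op n (gen_ch_mat n t S) (apply_op n (gen_ch_mat n t S) \<phi>)) = supp n \<phi>"
    using gch_invol[OF t] by (auto simp: supp_def)
  then show ?thesis using gch_supp_upper[OF t, of S "apply_op n (gen_ch_mat n t S) \<phi>"] by simp
qed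

lemma gch_bounds:
  assumes "gen_ch n V"
  shows "card (supp n (apply_op n V \<phi>)) \<le> 2 * card (supp n \<phi>)"
    "card (supp n \<phi>) \<le> 2 * card (supp n (apply_op n V \<phi>))"
  using assms gch_supp_upper gch_supp_lower unfolding gen_ch_def by blast+

lemma circ_bounds:
  "length Us = length Vs + 1 \<Longrightarrow> \<forall>U\<in>set Us. incoherent n U \<Longrightarrow> \<forall>V\<in>set Vs. gen_ch n V \<Longrightarrow>
   card (supp n (run_circ n Us Vs \<psi>)) \<le> 2^length Vs * card (supp n \<psi>) \<and>
   card (supp n \<psi>) \<le> 2^length Vs * card (supp n (run_circ n Us Vs \<psi>))"
proof (induction Vs arbitrary: Us \<psi>)
  case Nil
  then obtain U where "Us = [U]" by (cases Us) auto
  then show ?case using Nil incoh_supp[of n U \<psi>] by simp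
next
  case (Cons V Vs)
  then obtain U U' Us' where Us: "Us = U # U' # Us'"
    by (cases Us; cases "tl Us") auto
  define \<phi> where "\<phi> = apply_op n V (apply_op n U \<psi>)"
  have run: "run_circ n Us (V # Vs) \<psi> = run_circ n (U' # Us') Vs \<phi>"
    using Us \<phi>_def by simp
  have gV: "gen_ch n V" using Cons.prems by simp
  have iU: "incoherent n U" using Cons.prems Us by simp
  have c1: "card (supp n (apply_op n U \<psi>)) = card (supp n \<psi>)" by (rule incoh_supp[OF iU])
  have a: "card (supp n \<phi>) \<le> 2 * card (supp n \<psi>)"
    using gch_bounds(1)[OF gV, of "apply_op n U \<psi>"] c1 \<phi>_def by simp
  have b: "card (supp n \<psi>) \<le> 2 * card (supp n \<phi>)"
    using gch_bounds(2)[OF gV, of "apply_op n U \<psi>"] c1 \<phi>_def by simp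
  have IH: "card (supp n (run_circ n (U' # Us') Vs \<phi>)) \<le> 2^length Vs * card (supp n \<phi>) \<and>
     card (supp n \<phi>) \<le> 2^length Vs * card (supp n (run_circ n (U' # Us') Vs \<phi>))"
    using Cons.IH[of "U' # Us'" \<phi>] Cons.prems Us by simp
  let ?r = "card (supp n (run_circ n (U' # Us') Vs \<phi>))"
  have "?r \<le> 2^length Vs * (2 * card (supp n \<psi>))"
    using IH a mult_le_mono2 order_trans by blast
  moreover have "card (supp n \<psi>) \<le> 2 * (2^length Vs * ?r)"
    using IH b mult_le_mono2 order_trans by blast
  ultimately show ?case using run by (simp add: mult.assoc mult.left_commute)
qed

theorem lemma2:
  fixes n k :: nat and Us Vs :: "qop list" and \<psi> :: qstate
  assumes "length Us = k + 1" and "length Vs = k"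
    and "\<forall>U\<in>set Us. incoherent n U"
    and "\<forall>V\<in>set Vs. gen_ch n V"
    and "is_state n \<psi>"
  shows "real (coh_rank n \<psi>) / 2^k \<le> real (coh_rank n (run_circ n Us Vs \<psi>))
       \<and> real (coh_rank n (run_circ n Us Vs \<psi>)) \<le> 2^k * real (coh_rank n \<psi>)"
proof -
  let ?a = "card (supp n \<psi>)" and ?b = "card (supp n (run_circ n Us Vs \<psi>))"
  have h: "?b \<le> 2^k * ?a \<and> ?a \<le> 2^k * ?b"
    using circ_bounds[of Us Vs n \<psi>] assms by simp
  then have h1: "real ?b \<le> 2^k * real ?a" and h2: "real ?a \<le> 2^k * real ?b"
    by (metis of_nat_le_iff of_nat_mult of_nat_numeral of_nat_power)+
  have "real ?a / 2^k \<le> real ?b" using h2 by (simp add: divide_le_eq mult.commute)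
  then show ?thesis using h1 by (simp add: coh_rank_supp)
qed

end
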